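(* Let $G$ be a Frattini-injective pro-$p$ group and let $H$ be a finitely generated subgroup of $G$. Then $N_G(H) = N_G(\Phi(H))$. In particular, $H$ is normal in $G$ if and only if $\Phi(H)$ is normal in $G$.
   Context: $p$ is a prime; subgroups are closed. $\Phi(H)$ is the Frattini subgroup and $N_G(\cdot)$ the normalizer. A pro-$p$ group $G$ is Frattini-injective if distinct finitely generated subgroups of $G$ have distinct Frattini subgroups. *)

theory Defs
  imports "HOL-Analysis.Analysis" "HOL-Algebra.Algebra"
begin

definition topological_group :: "('a, 'b) monoid_scheme \<Rightarrow> 'a topology \<Rightarrow> bool" where
  "topological_group G T \<longleftrightarrow> group G \<and> topspace T = carrier G
     \<and> continuous_map (prod_topology T T) T (\<lambda>(x, y). x \<otimes>\<^bsub>G\<^esub> y)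
     \<and> continuous_map T T (\<lambda>x. inv\<^bsub>G\<^esub> x)"

definition profinite_group :: "('a, 'b) monoid_scheme \<Rightarrow> 'a topology \<Rightarrow> bool" where
  "profinite_group G T \<longleftrightarrow> topological_group G T \<and> compact_space T \<and> Hausdorff_space T
     \<and> (\<forall>S. connectedin T S \<longrightarrow> S = {} \<or> (\<exists>x. S = {x}))"

text \<open>Pro-p group: profinite group all of whose continuous finite quotients are p-groups,
i.e. every open normal subgroup has p-power index.\<close>
definition pro_p_group :: "nat \<Rightarrow> ('a, 'b) monoid_scheme \<Rightarrow> 'a topology \<Rightarrow> bool" where
  "pro_p_group p G T \<longleftrightarrow> Factorial_Ring.prime p \<and> profinite_group G T
     \<and> (\<forall>N. N \<lhd> G \<and> openin T N \<longrightarrow> (\<exists>k. card (rcosets\<^bsub>G\<^esub> N) = p ^ k))"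

definition closed_subgroup :: "('a, 'b) monoid_scheme \<Rightarrow> 'a topology \<Rightarrow> 'a set \<Rightarrow> bool" where
  "closed_subgroup G T H \<longleftrightarrow> subgroup H G \<and> closedin T H"

definition fg_subgroup :: "('a, 'b) monoid_scheme \<Rightarrow> 'a topology \<Rightarrow> 'a set \<Rightarrow> bool" where
  "fg_subgroup G T H \<longleftrightarrow> closed_subgroup G T H
     \<and> (\<exists>S. finite S \<and> S \<subseteq> H \<and> H = T closure_of (generate G S))"

definition maximal_open_subgroup ::
  "('a, 'b) monoid_scheme \<Rightarrow> 'a topology \<Rightarrow> 'a set \<Rightarrow> 'a set \<Rightarrow> bool" where
  "maximal_open_subgroup G T H K \<longleftrightarrow> subgroup K G \<and> K \<subset> H \<and> openin (subtopology T H) K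
     \<and> (\<forall>L. subgroup L G \<and> openin (subtopology T H) L \<and> K \<subseteq> L \<and> L \<subseteq> H \<longrightarrow> L = K \<or> L = H)"

text \<open>Frattini subgroup: intersection of all maximal open subgroups of H (H if there are none).\<close>
definition frattini :: "('a, 'b) monoid_scheme \<Rightarrow> 'a topology \<Rightarrow> 'a set \<Rightarrow> 'a set" where
  "frattini G T H = H \<inter> \<Inter> {K. maximal_open_subgroup G T H K}"

definition frattini_injective :: "('a, 'b) monoid_scheme \<Rightarrow> 'a topology \<Rightarrow> bool" where
  "frattini_injective G T \<longleftrightarrow>
     (\<forall>H1 H2. fg_subgroup G T H1 \<and> fg_subgroup G T H2 \<and> H1 \<noteq> H2
        \<longrightarrow> frattini G T H1 \<noteq> frattini G T H2)"

end

theory Submission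
  imports Defs
begin

definition cj :: "('a, 'b) monoid_scheme \<Rightarrow> 'a \<Rightarrow> 'a \<Rightarrow> 'a" where
  "cj G g x = g \<otimes>\<^bsub>G\<^esub> x \<otimes>\<^bsub>G\<^esub> inv\<^bsub>G\<^esub> g"

lemma cj_cont:
  assumes tg: "topological_group G T" and g: "g \<in> carrier G"
  shows "continuous_map T T (cj G g)"
proof -
  let ?m = "(\<lambda>(x, y). x \<otimes>\<^bsub>G\<^esub> y)"
  have m: "continuous_map (prod_topology T T) T ?m" and ts: "topspace T = carrier G"
    and grp: "group G"
    using tg by (auto simp: topological_group_def)
  have ig: "inv\<^bsub>G\<^esub> g \<in> topspace T" using g grp ts by (simp add: group.inv_closed)
  have gt: "g \<in> topspace T" using g ts by simp
  have c1: "continuous_map T T (\<lambda>x. ?m (g, x))"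
    using continuous_map_compose[OF continuous_map_pairedI[OF continuous_map_const[THEN iffD2] continuous_map_id] m] gt
    by (simp add: o_def)
  have c2: "continuous_map T T (\<lambda>x. ?m (?m (g, x), inv\<^bsub>G\<^esub> g))"
    using continuous_map_compose[OF continuous_map_pairedI[OF c1 continuous_map_const[THEN iffD2]] m] ig
    by (simp add: o_def)
  then show ?thesis by (simp add: cj_def[abs_def])
qed

lemma cj_inv:
  fixes G (structure)
  assumes grp: "group G" and g: "g \<in> carrier G" and x: "x \<in> carrier G"
  shows "cj G (inv\<^bsub>G\<^esub> g) (cj G g x) = x"
proof -
  interpret group G by fact
  have h: "\<And>z. z \<in> carrier G \<Longrightarrow> inv g \<otimes> (g \<otimes> z) = z"
    using g by (simp add: m_assoc[symmetric])
  have "cj G (inv g) (cj G g x) = (inv g \<otimes> g) \<otimes> x \<otimes> (inv g \<otimes> g)"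
    using g x by (simp add: cj_def m_assoc h)
  also have "\<dots> = x" using g x by simp
  finally show ?thesis .
qed

lemma cj_carrier:
  assumes "group G" "g \<in> carrier G" "x \<in> carrier G"
  shows "cj G g x \<in> carrier G"
  using assms by (simp add: cj_def group.inv_closed monoid.m_closed group.is_monoid)

lemma cj_hom:
  fixes G (structure)
  assumes grp: "group G" and g: "g \<in> carrier G"
  shows "cj G g \<in> hom G G"
proof -
  interpret group G by fact
  have h: "\<And>z. z \<in> carrier G \<Longrightarrow> inv g \<otimes> (g \<otimes> z) = z"
    using g by (simp add: m_assoc[symmetric])
  have e: "cj G g (x \<otimes> y) = cj G g x \<otimes> cj G g y" if "x \<in> carrier G" "y \<in> carrier G" for x y
  proof -
    have "cj G g x \<otimes> cj G g y = g \<otimes> x \<otimes> (inv g \<otimes> g) \<otimes> y \<otimes> inv g"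
      using g that by (simp add: cj_def m_assoc h)
    also have "\<dots> = cj G g (x \<otimes> y)" using g that by (simp add: cj_def m_assoc h)
    finally show ?thesis by simp
  qed
  show ?thesis
    unfolding hom_def
    using g e cj_carrier[OF grp g] by auto
qed

locale cpair =
  fixes G :: "('a, 'b) monoid_scheme" and T :: "'a topology" and f f'
  assumes tg: "topological_group G T"
    and fh: "homeomorphic_map T T f" and f'h: "homeomorphic_map T T f'"
    and fhom: "f \<in> hom G G" and f'hom: "f' \<in> hom G G"
    and ff': "\<And>x. x \<in> carrier G \<Longrightarrow> f' (f x) = x"
    and f'f: "\<And>x. x \<in> carrier G \<Longrightarrow> f (f' x) = x"
begin

lemma grp: "group G" and ts: "topspace T = carrier G"
  using tg by (auto simp: topological_group_def)

lemma cp_sym: "cpair G T f' f"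
  by (rule cpair.intro[OF tg f'h fh f'hom fhom f'f ff'])

lemma fcar: "x \<in> carrier G \<Longrightarrow> f x \<in> carrier G"
  using fhom by (auto simp: hom_def)

lemma img_car: "A \<subseteq> carrier G \<Longrightarrow> f ` A \<subseteq> carrier G"
  using fcar by auto

lemma back_img: "A \<subseteq> carrier G \<Longrightarrow> f' ` (f ` A) = A"
  using ff' by (force simp: image_iff)

lemma injimg: "A \<subseteq> carrier G \<Longrightarrow> B \<subseteq> carrier G \<Longrightarrow> f ` A = f ` B \<Longrightarrow> A = B"
proof -
  assume a: "A \<subseteq> carrier G" and b: "B \<subseteq> carrier G" and e: "f ` A = f ` B"
  have "A = f' ` (f ` A)" using back_img[OF a] by simp
  also have "\<dots> = f' ` (f ` B)" using e by simp
  also have "\<dots> = B" using back_img[OF b] by simp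
  finally show "A = B" .
qed

lemma sub_img: "subgroup K G \<Longrightarrow> subgroup (f ` K) G"
  using group_hom.subgroup_img_is_subgroup[of G G f K] grp fhom
  by (simp add: group_hom_def group_hom_axioms_def)

lemma fg_img:
  assumes "fg_subgroup G T H" shows "fg_subgroup G T (f ` H)"
proof -
  obtain S where S: "finite S" "S \<subseteq> H" "H = T closure_of (generate G S)"
    and sg: "subgroup H G" and cl: "closedin T H"
    using assms by (auto simp: fg_subgroup_def closed_subgroup_def)
  have Hc: "H \<subseteq> carrier G" using sg by (simp add: subgroup.subset)
  have gc: "generate G S \<subseteq> carrier G"
    using S Hc group.generate_incl[OF grp] by blast
  have gct: "generate G S \<subseteq> topspace T" using gc ts by simp
  have e0: "T closure_of (f ` generate G S) = f ` (T closure_of generate G S)"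
    by (rule homeomorphic_map_closure_of[OF fh gct])
  have e1: "f ` H = T closure_of (f ` generate G S)"
    by (subst S(3)) (rule e0[symmetric])
  have gh: "group_hom G G f"
    using grp fhom by (simp add: group_hom_def group_hom_axioms_def)
  have SH: "S \<subseteq> carrier G" using S Hc by blast
  have e2: "f ` generate G S = generate G (f ` S)"
    using group_hom.generate_img[OF gh SH] by (rule HOL.sym)
  have e: "f ` H = T closure_of (generate G (f ` S))" using e1 unfolding e2 .
  have Ht: "H \<subseteq> topspace T" using Hc ts by simp
  have "closedin T (f ` H)"
    using homeomorphic_map_closedness[OF fh Ht] cl by simp
  then have "closed_subgroup G T (f ` H)" unfolding closed_subgroup_def using sub_img[OF sg] by blast
  moreover have "finite (f ` S)" using S(1) by simp
  moreover have "f ` S \<subseteq> f ` H" using S(2) by (rule image_mono)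
  ultimately show ?thesis unfolding fg_subgroup_def using e by blast
qed

lemma open_img:
  assumes Hc: "H \<subseteq> carrier G" and o: "openin (subtopology T H) K"
  shows "openin (subtopology T (f ` H)) (f ` K)"
proof -
  have hm: "homeomorphic_map (subtopology T H) (subtopology T (f ` H)) f"
    by (rule homeomorphic_map_subtopologies[OF fh]) (simp add: ts Int_absorb1 Hc img_car[OF Hc])
  have Ks: "K \<subseteq> topspace (subtopology T H)" using openin_subset[OF o] .
  show ?thesis using homeomorphic_map_openness[OF hm Ks] o by simp
qed

lemma max_img:
  assumes Hc: "H \<subseteq> carrier G" and m: "maximal_open_subgroup G T H K"
  shows "maximal_open_subgroup G T (f ` H) (f ` K)"
proof -
  interpret s: cpair G T f' f by (rule cp_sym)
  have sgK: "subgroup K G" and KH: "K \<subset> H" and oK: "openin (subtopology T H) K"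
    and mx: "\<And>L. subgroup L G \<Longrightarrow> openin (subtopology T H) L \<Longrightarrow> K \<subseteq> L \<Longrightarrow> L \<subseteq> H \<Longrightarrow> L = K \<or> L = H"
    using m unfolding maximal_open_subgroup_def by blast+
  have KH': "K \<subseteq> H" using KH by (rule psubset_imp_subset)
  have Kc: "K \<subseteq> carrier G" using KH' Hc by (rule subset_trans)
  have "f ` K \<subseteq> f ` H" using KH' by (rule image_mono)
  moreover have "f ` K \<noteq> f ` H"
  proof
    assume "f ` K = f ` H"
    then have "K = H" by (rule injimg[OF Kc Hc])
    then show False using KH by simp
  qed
  ultimately have ps: "f ` K \<subset> f ` H" by (rule psubsetI)
  have op: "openin (subtopology T (f ` H)) (f ` K)" using open_img[OF Hc oK] .
  have mxL: "L = f ` K \<or> L = f ` H"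
    if L: "subgroup L G" "openin (subtopology T (f ` H)) L" "f ` K \<subseteq> L" "L \<subseteq> f ` H" for L
  proof -
    have fHc: "f ` H \<subseteq> carrier G" using img_car[OF Hc] .
    have Lc: "L \<subseteq> carrier G" using L(4) fHc by (rule subset_trans)
    have "subgroup (f' ` L) G" using s.sub_img[OF L(1)] .
    moreover have "openin (subtopology T H) (f' ` L)"
      using s.open_img[OF fHc L(2)] back_img[OF Hc] by simp
    moreover have "K \<subseteq> f' ` L"
    proof -
      have "f' ` (f ` K) \<subseteq> f' ` L" using L(3) by (rule image_mono)
      then show ?thesis using back_img[OF Kc] by simp
    qed
    moreover have "f' ` L \<subseteq> H"
    proof -
      have "f' ` L \<subseteq> f' ` (f ` H)" using L(4) by (rule image_mono)
      then show ?thesis using back_img[OF Hc] by simp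
    qed
    ultimately have "f' ` L = K \<or> f' ` L = H" using mx by blast
    then show ?thesis
    proof
      assume "f' ` L = K"
      then have "f ` (f' ` L) = f ` K" by simp
      then show ?thesis using s.back_img[OF Lc] by simp
    next
      assume "f' ` L = H"
      then have "f ` (f' ` L) = f ` H" by simp
      then show ?thesis using s.back_img[OF Lc] by simp
    qed
  qed
  show ?thesis
    unfolding maximal_open_subgroup_def
  proof (intro conjI allI impI)
    show "subgroup (f ` K) G" by (rule sub_img[OF sgK])
    show "f ` K \<subset> f ` H" by (rule ps)
    show "openin (subtopology T (f ` H)) (f ` K)" by (rule op)
    fix L assume "subgroup L G \<and> openin (subtopology T (f ` H)) L \<and> f ` K \<subseteq> L \<and> L \<subseteq> f ` H"
    then show "L = f ` K \<or> L = f ` H" using mxL by blast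
  qed
qed

lemma fratt_sub:
  assumes Hc: "H \<subseteq> carrier G"
  shows "f ` frattini G T H \<subseteq> frattini G T (f ` H)"
proof
  interpret s: cpair G T f' f by (rule cp_sym)
  fix y assume "y \<in> f ` frattini G T H"
  then obtain x where x0: "x \<in> frattini G T H" and y: "y = f x" by blast
  have x: "x \<in> H" "\<And>K. maximal_open_subgroup G T H K \<Longrightarrow> x \<in> K"
    using x0 unfolding frattini_def by blast+
  have "y \<in> K'" if m: "maximal_open_subgroup G T (f ` H) K'" for K'
  proof -
    have "maximal_open_subgroup G T (f' ` (f ` H)) (f' ` K')"
      using s.max_img[OF img_car[OF Hc] m] .
    then have "maximal_open_subgroup G T H (f' ` K')" using back_img[OF Hc] by simp
    then have "x \<in> f' ` K'" using x by blast
    moreover have "K' \<subseteq> carrier G"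
      using m subgroup.subset unfolding maximal_open_subgroup_def by blast
    ultimately show ?thesis using y f'f by auto
  qed
  then show "y \<in> frattini G T (f ` H)" using x y by (auto simp: frattini_def)
qed

lemma fratt_eq:
  assumes Hc: "H \<subseteq> carrier G"
  shows "frattini G T (f ` H) = f ` frattini G T H"
proof
  interpret s: cpair G T f' f by (rule cp_sym)
  show "f ` frattini G T H \<subseteq> frattini G T (f ` H)" using fratt_sub[OF Hc] .
  have fHc: "f ` H \<subseteq> carrier G" using img_car[OF Hc] .
  have sub: "f' ` frattini G T (f ` H) \<subseteq> frattini G T H"
    using s.fratt_sub[OF fHc] unfolding back_img[OF Hc] .
  have Xc: "frattini G T (f ` H) \<subseteq> carrier G" using fHc by (auto simp: frattini_def)
  have "frattini G T (f ` H) = f ` (f' ` frattini G T (f ` H))"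
    using s.back_img[OF Xc] by simp
  also have "\<dots> \<subseteq> f ` frattini G T H" using sub by (rule image_mono)
  finally show "frattini G T (f ` H) \<subseteq> f ` frattini G T H" .
qed

end

lemma cj_cpair:
  assumes tg: "topological_group G T" and g: "g \<in> carrier G"
  shows "cpair G T (cj G g) (cj G (inv\<^bsub>G\<^esub> g))"
proof -
  have grp: "group G" using tg unfolding topological_group_def by (elim conjE)
  have ts: "topspace T = carrier G" using tg unfolding topological_group_def by (elim conjE)
  have ig: "inv\<^bsub>G\<^esub> g \<in> carrier G" by (rule group.inv_closed[OF grp g])
  have a: "\<And>x. x \<in> carrier G \<Longrightarrow> cj G (inv\<^bsub>G\<^esub> g) (cj G g x) = x"
    by (rule cj_inv[OF grp g])
  have b0: "\<And>x. x \<in> carrier G \<Longrightarrow> cj G (inv\<^bsub>G\<^esub> (inv\<^bsub>G\<^esub> g)) (cj G (inv\<^bsub>G\<^esub> g) x) = x"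
    by (rule cj_inv[OF grp ig])
  have ii: "inv\<^bsub>G\<^esub> (inv\<^bsub>G\<^esub> g) = g" by (rule group.inv_inv[OF grp g])
  have b: "\<And>x. x \<in> carrier G \<Longrightarrow> cj G g (cj G (inv\<^bsub>G\<^esub> g) x) = x"
    using b0 unfolding ii .
  have hm: "homeomorphic_maps T T (cj G g) (cj G (inv\<^bsub>G\<^esub> g))"
    unfolding homeomorphic_maps_def
  proof (intro conjI ballI)
    show "continuous_map T T (cj G g)" by (rule cj_cont[OF tg g])
    show "continuous_map T T (cj G (inv\<^bsub>G\<^esub> g))" by (rule cj_cont[OF tg ig])
    show "cj G (inv\<^bsub>G\<^esub> g) (cj G g x) = x" if "x \<in> topspace T" for x
      using a[of x] that unfolding ts .
    show "cj G g (cj G (inv\<^bsub>G\<^esub> g) x) = x" if "x \<in> topspace T" for x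
      using b[of x] that unfolding ts .
  qed
  have h1: "homeomorphic_map T T (cj G g)" by (rule homeomorphic_maps_imp_map[OF hm])
  have h2: "homeomorphic_map T T (cj G (inv\<^bsub>G\<^esub> g))"
    by (rule homeomorphic_maps_imp_map[OF homeomorphic_maps_sym[THEN iffD1, OF hm]])
  show ?thesis
    by (rule cpair.intro[OF tg h1 h2 cj_hom[OF grp g] cj_hom[OF grp ig] a b])
qed

lemma normalizer_iff:
  assumes grp: "group G" and Xc: "A \<subseteq> carrier G"
  shows "g \<in> normalizer G A \<longleftrightarrow> g \<in> carrier G \<and> cj G g ` A = A"
proof -
  have "g <#\<^bsub>G\<^esub> A #>\<^bsub>G\<^esub> inv\<^bsub>G\<^esub> g = cj G g ` A"
    unfolding cj_def l_coset_def r_coset_def by auto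
  then show ?thesis using Xc unfolding normalizer_def stabilizer_def by auto
qed

lemma normal_iff:
  fixes G (structure)
  assumes grp: "group G" and sg: "subgroup A G"
  shows "A \<lhd> G \<longleftrightarrow> carrier G \<subseteq> normalizer G A"
proof -
  interpret group G by fact
  have Xc: "A \<subseteq> carrier G" using sg by (simp add: subgroup.subset)
  have "A \<lhd> G \<longleftrightarrow> (\<forall>g \<in> carrier G. \<forall>h \<in> A. g \<otimes> h \<otimes> inv g \<in> A)"
    using normal_inv_iff sg by blast
  also have "\<dots> \<longleftrightarrow> (\<forall>g \<in> carrier G. cj G g ` A \<subseteq> A)"
    by (auto simp: cj_def)
  also have "\<dots> \<longleftrightarrow> (\<forall>g \<in> carrier G. cj G g ` A = A)"
  proof safe
    fix g x assume A: "\<forall>g\<in>carrier G. cj G g ` A \<subseteq> A" and g: "g \<in> carrier G" and x: "x \<in> A"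
    have e1: "cj G (inv g) x \<in> A" using A g x by auto
    have e2: "cj G g (cj G (inv g) x) = x"
      using cj_inv[of G "inv g" x] g x Xc by auto
    show "x \<in> cj G g ` A" by (rule image_eqI[of x "cj G g" "cj G (inv g) x" A, OF HOL.sym[OF e2] e1])
  qed auto
  finally show ?thesis using normalizer_iff[OF grp Xc] by auto
qed

lemma frattini_subgroup:
  assumes grp: "group G" and sg: "subgroup H G"
  shows "subgroup (frattini G T H) G"
proof -
  have "frattini G T H = \<Inter> (insert H {K. maximal_open_subgroup G T H K})"
    by (auto simp: frattini_def)
  also have "subgroup \<dots> G"
    by (rule group.subgroups_Inter[OF grp]) (use sg in \<open>auto simp: maximal_open_subgroup_def\<close>)
  finally show ?thesis .
qed

theorem mainTheorem14:
  fixes p :: nat and G :: "('a, 'b) monoid_scheme" and T :: "'a topology" and H :: "'a set"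
  assumes "pro_p_group p G T"
    and "frattini_injective G T"
    and "fg_subgroup G T H"
  shows "normalizer G H = normalizer G (frattini G T H)
         \<and> (H \<lhd> G \<longleftrightarrow> frattini G T H \<lhd> G)"
proof -
  have tg: "topological_group G T" using assms(1)
    unfolding pro_p_group_def profinite_group_def by blast
  have grp: "group G" using tg by (simp add: topological_group_def)
  have sg: "subgroup H G" using assms(3) by (simp add: fg_subgroup_def closed_subgroup_def)
  have Hc: "H \<subseteq> carrier G" using sg by (simp add: subgroup.subset)
  have Fc: "frattini G T H \<subseteq> carrier G" using Hc by (auto simp: frattini_def)
  have eq: "normalizer G H = normalizer G (frattini G T H)"
  proof (rule equalityI; rule subsetI)
    fix g assume "g \<in> normalizer G H"
    then have g: "g \<in> carrier G" and e: "cj G g ` H = H" using normalizer_iff[OF grp Hc] by auto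
    interpret c: cpair G T "cj G g" "cj G (inv\<^bsub>G\<^esub> g)" using cj_cpair[OF tg g] .
    have "cj G g ` frattini G T H = frattini G T H" using c.fratt_eq[OF Hc] e by simp
    then show "g \<in> normalizer G (frattini G T H)" using normalizer_iff[OF grp Fc] g by auto
  next
    fix g assume "g \<in> normalizer G (frattini G T H)"
    then have g: "g \<in> carrier G" and e: "cj G g ` frattini G T H = frattini G T H"
      using normalizer_iff[OF grp Fc] by auto
    interpret c: cpair G T "cj G g" "cj G (inv\<^bsub>G\<^esub> g)" using cj_cpair[OF tg g] .
    have feq: "frattini G T (cj G g ` H) = frattini G T H" using c.fratt_eq[OF Hc] e by simp
    have fgc: "fg_subgroup G T (cj G g ` H)" using c.fg_img[OF assms(3)] .
    have fi: "\<And>H1 H2. fg_subgroup G T H1 \<Longrightarrow> fg_subgroup G T H2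
        \<Longrightarrow> frattini G T H1 = frattini G T H2 \<Longrightarrow> H1 = H2"
      using assms(2) unfolding frattini_injective_def by blast
    have "cj G g ` H = H" by (rule fi[OF fgc assms(3) feq])
    then show "g \<in> normalizer G H" using normalizer_iff[OF grp Hc] g by auto
  qed
  have "H \<lhd> G \<longleftrightarrow> frattini G T H \<lhd> G"
    unfolding normal_iff[OF grp sg] normal_iff[OF grp frattini_subgroup[OF grp sg]] eq by (rule refl)
  with eq show ?thesis by blast
qed

end
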